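(* Let $(K,\mathrm{val})$ be a valued field whose residue class field $F$ has characteristic two, and assume every strict unit admits a square root in $K$. Let $A$ be a subring with $B\subseteq A\subseteq K$ and let $\mathcal M$ be a nonzero proper quasi-quadratic module of $A$. Then $S=\mathrm{val}(\mathcal M\setminus\{0\})$ is a well-behaved subset of $\mathrm{val}(A\setminus\{0\})$, and exactly one of the following holds: (1) $S$ has no smallest element, and $\mathcal M=\Gamma_1(S)$; (2) $A=B$, $S$ has a smallest element $g_{\min}$, and $\mathcal M=\Gamma_2(S,M_{g_{\min}}(\mathcal M))$.
   Context: Let $(G,\le)$ be a totally ordered abelian group written multiplicatively with identity $e$, $G^2=\{g^2:g\in G\}$. Let $(K,\mathrm{val})$ be a valued field with surjective valuation $\mathrm{val}:K\to G\cup\{\infty\}$, valuation ring $B=\{x:\mathrm{val}(x)\ge e\}$, residue map $\pi:B\to F$, residue field $F$. A strict unit is $x\in B^\times$ with $\pi(x)=1$. For $g\in G$, $\overline g$ denotes its class in $G/G^2$. A quasi-quadratic module in a commutative ring $R$ is a subset $M$ with $M+M\subseteq M$ and $a^2M\subseteq M$ for all $a\in R$. A pseudo-angular component map is a map $\mathrm{p.an}:K^\times\to F^\times$ such that: (1) $\mathrm{p.an}(u)=\pi(u)$ for $u\in B^\times$; (2) $\mathrm{p.an}(ux)=\pi(u)\mathrm{p.an}(x)$ for $u\in B^\times,x\in K^\times$; (3) for all $g\in G$, $c\in F^\times$ there is $w\in K$ with $\mathrm{val}(w)=g$, $\mathrm{p.an}(w)=c$; (4) for nonzero $x_1,x_2$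 with $x_1+x_2\ne0$: if $\mathrm{val}(x_1)<\mathrm{val}(x_2)$ then $\mathrm{p.an}(x_1+x_2)=\mathrm{p.an}(x_1)$; if $\mathrm{val}(x_1)=\mathrm{val}(x_2)$ and $\mathrm{p.an}(x_1)+\mathrm{p.an}(x_2)\ne0$ then $\mathrm{val}(x_1+x_2)=\mathrm{val}(x_1)$ and $\mathrm{p.an}(x_1+x_2)=\mathrm{p.an}(x_1)+\mathrm{p.an}(x_2)$; (5) if $x,y\in K^\times$, $\overline{\mathrm{val}(x)}=\overline{\mathrm{val}(y)}$ and $\mathrm{p.an}(x)=\mathrm{p.an}(y)$ then $y=u^2x$ for some $u\in K^\times$; (6) for $a,u\in K^\times$ there is $k\in F^\times$ with $\mathrm{p.an}(au^2)=\mathrm{p.an}(a)k^2$. Such a map exists when strict units are squares; fix one. A subset $S\subseteq\mathrm{val}(A\setminus\{0\})$ is well-behaved if (i) $h\le g$ for all $g\in S$ and $h\in\mathrm{val}(A^\times)$, and (ii) $gh\in S$ for all $g\in S$ and $h\in\mathrm{val}(A\setminus\{0\})$. For well-behaved $S$: $\Gamma_1(S)=\{x\in A\setminus\{0\}:\mathrm{val}(x)\in S\}\cup\{0\}$; if $S$ has a smallest element $g_{\min}$ and $M$ is a quasi-quadratic module of $F$: $\Gamma_2(S,M)=\{x\in A:\ (\mathrm{val}(x)=g_{\min}\text{ and }\mathrm{p.an}(x)\in M)\text{ or }\mathrm{val}(x)>g_{\min}\}$ (containing $0$ since $\mathrm{val}(0)=\infty$). For $g\in G$: $M_g(\mathcal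 M)=\{\mathrm{p.an}(x):x\in\mathcal M\setminus\{0\},\ \mathrm{val}(x)=g\}\cup\{0\}$. *)

theory Defs
  imports Main
begin

text \<open>The value group G is written additively (class linordered_ab_group_add):
  the identity e is 0, g^2 is g + g. The valuation val is a total function on K whose value
  at 0 is irrelevant (it stands for infinity); all conditions treat 0 separately.
  The residue map pi is a total function on K, only its restriction to B matters.\<close>

definition valuation_ring :: "('k::field \<Rightarrow> 'g::linordered_ab_group_add) \<Rightarrow> 'k set" where
  "valuation_ring val = {x. x = 0 \<or> val x \<ge> 0}"

definition valued_field ::
  "('k::field \<Rightarrow> 'g::linordered_ab_group_add) \<Rightarrow> ('k \<Rightarrow> 'f::field) \<Rightarrow> bool" where
  "valued_field val \<pi> \<longleftrightarrow>
     (\<forall>x y. x \<noteq> 0 \<longrightarrow> y \<noteq> 0 \<longrightarrow> val (x * y) = val x + val y) \<and>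
     (\<forall>x y. x \<noteq> 0 \<longrightarrow> y \<noteq> 0 \<longrightarrow> x + y \<noteq> 0 \<longrightarrow> val (x + y) \<ge> min (val x) (val y)) \<and>
     (\<forall>g. \<exists>x. x \<noteq> 0 \<and> val x = g) \<and>
     (\<forall>x\<in>valuation_ring val. \<forall>y\<in>valuation_ring val. \<pi> (x + y) = \<pi> x + \<pi> y) \<and>
     (\<forall>x\<in>valuation_ring val. \<forall>y\<in>valuation_ring val. \<pi> (x * y) = \<pi> x * \<pi> y) \<and>
     \<pi> 1 = 1 \<and>
     \<pi> ` valuation_ring val = UNIV \<and>
     (\<forall>x\<in>valuation_ring val. \<pi> x = 0 \<longleftrightarrow> (x = 0 \<or> val x > 0))"

definition B_unit :: "('k::field \<Rightarrow> 'g::linordered_ab_group_add) \<Rightarrow> 'k \<Rightarrow> bool" where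
  "B_unit val u \<longleftrightarrow> u \<noteq> 0 \<and> val u = 0"

definition strict_unit :: "('k::field \<Rightarrow> 'g::linordered_ab_group_add) \<Rightarrow> ('k \<Rightarrow> 'f::field) \<Rightarrow> 'k \<Rightarrow> bool" where
  "strict_unit val \<pi> u \<longleftrightarrow> B_unit val u \<and> \<pi> u = 1"

text \<open>Same class in G/G^2.\<close>
definition same_sq_class :: "'g::linordered_ab_group_add \<Rightarrow> 'g \<Rightarrow> bool" where
  "same_sq_class g h \<longleftrightarrow> (\<exists>k. g = h + k + k)"

definition pseudo_angular ::
  "('k::field \<Rightarrow> 'g::linordered_ab_group_add) \<Rightarrow> ('k \<Rightarrow> 'f::field) \<Rightarrow> ('k \<Rightarrow> 'f) \<Rightarrow> bool" where
  "pseudo_angular val \<pi> pan \<longleftrightarrow>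
     (\<forall>x. x \<noteq> 0 \<longrightarrow> pan x \<noteq> 0) \<and>
     (\<forall>u. B_unit val u \<longrightarrow> pan u = \<pi> u) \<and>
     (\<forall>u x. B_unit val u \<longrightarrow> x \<noteq> 0 \<longrightarrow> pan (u * x) = \<pi> u * pan x) \<and>
     (\<forall>g c. c \<noteq> 0 \<longrightarrow> (\<exists>w. w \<noteq> 0 \<and> val w = g \<and> pan w = c)) \<and>
     (\<forall>x1 x2. x1 \<noteq> 0 \<longrightarrow> x2 \<noteq> 0 \<longrightarrow> x1 + x2 \<noteq> 0 \<longrightarrow>
        (val x1 < val x2 \<longrightarrow> pan (x1 + x2) = pan x1) \<and>
        (val x1 = val x2 \<longrightarrow> pan x1 + pan x2 \<noteq> 0 \<longrightarrow>
           val (x1 + x2) = val x1 \<and> pan (x1 + x2) = pan x1 + pan x2)) \<and>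
     (\<forall>x y. x \<noteq> 0 \<longrightarrow> y \<noteq> 0 \<longrightarrow> same_sq_class (val x) (val y) \<longrightarrow> pan x = pan y \<longrightarrow>
        (\<exists>u. u \<noteq> 0 \<and> y = u * u * x)) \<and>
     (\<forall>a u. a \<noteq> 0 \<longrightarrow> u \<noteq> 0 \<longrightarrow> (\<exists>k. k \<noteq> 0 \<and> pan (a * u * u) = pan a * k * k))"

definition subring :: "'k::field set \<Rightarrow> bool" where
  "subring A \<longleftrightarrow> 0 \<in> A \<and> 1 \<in> A \<and> (\<forall>x\<in>A. \<forall>y\<in>A. x + y \<in> A \<and> x * y \<in> A \<and> - x \<in> A)"

definition quasi_quadratic_module :: "'r::comm_ring set \<Rightarrow> 'r set \<Rightarrow> bool" where
  "quasi_quadratic_module R M \<longleftrightarrow> M \<subseteq> R \<and> (\<forall>x\<in>M. \<forall>y\<in>M. x + y \<in> M) \<and>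
     (\<forall>a\<in>R. \<forall>x\<in>M. a * a * x \<in> M)"

definition ring_units :: "'k::field set \<Rightarrow> 'k set" where
  "ring_units A = {x\<in>A. x \<noteq> 0 \<and> inverse x \<in> A}"

definition well_behaved ::
  "('k::field \<Rightarrow> 'g::linordered_ab_group_add) \<Rightarrow> 'k set \<Rightarrow> 'g set \<Rightarrow> bool" where
  "well_behaved val A S \<longleftrightarrow> S \<subseteq> val ` (A - {0}) \<and>
     (\<forall>g\<in>S. \<forall>h\<in>val ` ring_units A. h \<le> g) \<and>
     (\<forall>g\<in>S. \<forall>h\<in>val ` (A - {0}). g + h \<in> S)"

definition has_min :: "'g::linorder set \<Rightarrow> bool" where
  "has_min S \<longleftrightarrow> (\<exists>g\<in>S. \<forall>h\<in>S. g \<le> h)"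

definition Gamma1 :: "('k::field \<Rightarrow> 'g::linordered_ab_group_add) \<Rightarrow> 'k set \<Rightarrow> 'g set \<Rightarrow> 'k set" where
  "Gamma1 val A S = {x\<in>A. x \<noteq> 0 \<and> val x \<in> S} \<union> {0}"

definition Gamma2 ::
  "('k::field \<Rightarrow> 'g::linordered_ab_group_add) \<Rightarrow> ('k \<Rightarrow> 'f::field) \<Rightarrow> 'k set \<Rightarrow> 'g set \<Rightarrow> 'f set \<Rightarrow> 'k set" where
  "Gamma2 val pan A S M = {x\<in>A. x = 0 \<or> (val x = (LEAST g. g \<in> S) \<and> pan x \<in> M) \<or> val x > (LEAST g. g \<in> S)}"

definition M_g ::
  "('k::field \<Rightarrow> 'g::linordered_ab_group_add) \<Rightarrow> ('k \<Rightarrow> 'f::field) \<Rightarrow> 'g \<Rightarrow> 'k set \<Rightarrow> 'f set" where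
  "M_g val pan g \<M> = {pan x | x. x \<in> \<M> \<and> x \<noteq> 0 \<and> val x = g} \<union> {0}"

end

theory Submission
  imports Defs
begin

lemma vf_mult: "valued_field val \<pi> \<Longrightarrow> x \<noteq> 0 \<Longrightarrow> y \<noteq> 0 \<Longrightarrow> val (x * y) = val x + val y"
  unfolding valued_field_def by blast

lemma vf_add: "valued_field val \<pi> \<Longrightarrow> x \<noteq> 0 \<Longrightarrow> y \<noteq> 0 \<Longrightarrow> x + y \<noteq> 0 \<Longrightarrow> min (val x) (val y) \<le> val (x + y)"
  unfolding valued_field_def by blast

lemma vf_piadd: "valued_field val \<pi> \<Longrightarrow> x \<in> valuation_ring val \<Longrightarrow> y \<in> valuation_ring val \<Longrightarrow> \<pi> (x + y) = \<pi> x + \<pi> y"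
  unfolding valued_field_def by blast

lemma vf_pione: "valued_field val \<pi> \<Longrightarrow> \<pi> 1 = 1"
  unfolding valued_field_def by blast

lemma vf_piker: "valued_field val \<pi> \<Longrightarrow> x \<in> valuation_ring val \<Longrightarrow> \<pi> x = 0 \<longleftrightarrow> (x = 0 \<or> val x > 0)"
  unfolding valued_field_def by blast

lemma double_zero: "(v::'g::linordered_ab_group_add) + v = 0 \<Longrightarrow> v = 0"
proof (rule ccontr)
  assume h: "v + v = 0" "v \<noteq> 0"
  show False
  proof (cases "v < 0")
    case True then have "v + v < 0" using add_neg_neg by blast
    then show ?thesis using h by simp
  next
    case False then have "v > 0" using h by auto
    then have "v + v > 0" using add_pos_pos by blast
    then show ?thesis using h by simp
  qed
qed

lemma vf_one: assumes "valued_field val \<pi>" shows "val 1 = 0"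
proof -
  have "val (1 * 1) = val 1 + val 1" using vf_mult[OF assms, of 1 1] by simp
  then have "val 1 + val 1 = val 1" by simp
  then show ?thesis by simp
qed

lemma vf_inv: assumes "valued_field val \<pi>" "x \<noteq> 0" shows "val (inverse x) = - val x"
proof -
  have "val (x * inverse x) = val x + val (inverse x)" using vf_mult[OF assms(1) assms(2), of "inverse x"] assms(2) by simp
  then have "val x + val (inverse x) = 0" using vf_one[OF assms(1)] assms(2) by simp
  then show ?thesis by (simp add: eq_neg_iff_add_eq_0 add.commute)
qed

lemma vf_mone: assumes "valued_field val \<pi>" shows "val (-1) = 0"
proof -
  have "val ((-1) * (-1)) = val (-1) + val (-1)" using vf_mult[OF assms, of "-1" "-1"] by simp
  then have "val (-1) + val (-1) = 0" using vf_one[OF assms] by simp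
  then show ?thesis using double_zero by blast
qed

lemma key:
  fixes \<pi> :: "'k::field \<Rightarrow> 'f::field" and val :: "'k \<Rightarrow> 'g::linordered_ab_group_add"
  assumes vf: "valued_field val \<pi>"
    and char2: "(1::'f::field) + 1 = 0"
    and sqrt: "\<forall>u. strict_unit val \<pi> u \<longrightarrow> (\<exists>y. y * y = u)"
    and AB: "valuation_ring val \<subseteq> A"
    and qm: "quasi_quadratic_module A M"
    and x: "x \<in> M" "x \<noteq> 0" and y: "y \<noteq> 0" and lt: "val x < val y"
  shows "y \<in> M"
proof -
  define z where "z = y / x"
  have z0: "z \<noteq> 0" using x y z_def by simp
  have yzx: "y = z * x" using x z_def by simp
  have "val y = val z + val x" using yzx vf_mult[OF vf z0 x(2)] by simp
  then have vz: "val z > 0" using lt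
    by (metis add.commute less_add_same_cancel1)
  have zB: "z \<in> valuation_ring val" using vz unfolding valuation_ring_def by (simp add: less_imp_le)
  have mB: "-1 \<in> valuation_ring val" using vf_mone[OF vf] unfolding valuation_ring_def by simp
  have z1: "z + -1 \<noteq> 0" using vz vf_one[OF vf] by auto
  have "min (val z) (val (-1)) \<le> val (z + -1)" using vf_add[OF vf z0 _ z1] by simp
  then have vz1: "val (z + -1) \<ge> 0" using vz vf_mone[OF vf] by simp
  then have z1B: "z + -1 \<in> valuation_ring val" unfolding valuation_ring_def by simp
  have pi0: "\<pi> 0 = 0" using vf_piker[OF vf, of 0] unfolding valuation_ring_def by simp
  have oneB: "1 \<in> valuation_ring val" using vf_one[OF vf] unfolding valuation_ring_def by simp
  have "\<pi> (1 + -1) = \<pi> 1 + \<pi> (-1)" using vf_piadd[OF vf oneB mB] .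
  then have pim: "\<pi> (-1) = -1" using pi0 vf_pione[OF vf] by (simp add: eq_neg_iff_add_eq_0 add.commute)
  have piz: "\<pi> z = 0" using vf_piker[OF vf zB] vz by simp
  have a: "\<pi> (z + -1) = -1" using vf_piadd[OF vf zB mB] piz pim by simp
  have b: "(-1::'f) = 1" using char2 by (simp add: eq_neg_iff_add_eq_0 add.commute)
  have piz1: "\<pi> (z + -1) = 1" using a b by simp
  have "\<not> val (z + -1) > 0" using vf_piker[OF vf z1B] piz1 by simp
  then have "val (z + -1) = 0" using vz1 by simp
  then have "strict_unit val \<pi> (z + -1)"
    unfolding strict_unit_def B_unit_def using z1 piz1 by simp
  then obtain s where s: "s * s = z + -1" using sqrt by blast
  have s0: "s \<noteq> 0" using s z1 by auto
  have "val s + val s = 0" using vf_mult[OF vf s0 s0] s \<open>val (z + -1) = 0\<close> by simp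
  then have "val s = 0" by (rule double_zero)
  then have "s \<in> A" using AB unfolding valuation_ring_def by auto
  then have "s * s * x \<in> M" using qm x unfolding quasi_quadratic_module_def by blast
  then have "s * s * x + x \<in> M" using qm x unfolding quasi_quadratic_module_def by blast
  moreover have "s * s * x + x = (s * s + 1) * x" by (simp add: algebra_simps)
  then have "s * s * x + x = y" using s yzx by simp
  ultimately show ?thesis by simp
qed

lemma ga1: "(b::'g::linordered_ab_group_add) \<le> c \<Longrightarrow> c < d \<Longrightarrow> (b - d) + (b - d) + c < b"
proof -
  assume h: "b \<le> c" "c < d"
  have "b - d < 0" using h by simp
  moreover have "c - d < 0" using h by simp
  ultimately have "(b - d) + (c - d) < 0" by (rule add_neg_neg)
  moreover have "(b - d) + (b - d) + c - b = (b - d) + (c - d)" by (simp add: algebra_simps)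
  ultimately show ?thesis by (metis diff_less_0_iff_less)
qed

lemma ga2: "(a::'g::linordered_ab_group_add) < 0 \<Longrightarrow> a + a + c < c + a"
  by (simp add: add.commute add.left_commute)

lemma ga3: "(a::'g::linordered_ab_group_add) > 0 \<Longrightarrow> c < c + a"
  by simp

theorem mainTheorem19:
  fixes val :: "'k::field \<Rightarrow> 'g::linordered_ab_group_add"
    and \<pi> :: "'k \<Rightarrow> 'f::field"
    and pan :: "'k \<Rightarrow> 'f"
    and A \<M> :: "'k set"
  assumes vf: "valued_field val \<pi>"
    and char2: "(1::'f) + 1 = 0"
    and sqrt: "\<forall>u. strict_unit val \<pi> u \<longrightarrow> (\<exists>y. y * y = u)"
    and pan: "pseudo_angular val \<pi> pan"
    and A: "subring A" "valuation_ring val \<subseteq> A"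
    and qm: "quasi_quadratic_module A \<M>"
    and nonzero: "\<exists>x\<in>\<M>. x \<noteq> 0"
    and proper: "\<M> \<noteq> A"
  shows "well_behaved val A (val ` (\<M> - {0})) \<and>
    ((\<not> has_min (val ` (\<M> - {0})) \<and> \<M> = Gamma1 val A (val ` (\<M> - {0})))
     \<noteq>
     (A = valuation_ring val \<and> has_min (val ` (\<M> - {0})) \<and>
      \<M> = Gamma2 val pan A (val ` (\<M> - {0}))
             (M_g val pan (LEAST g. g \<in> val ` (\<M> - {0})) \<M>)))"
proof -
  define S where "S = val ` (\<M> - {0})"
  have MA: "\<M> \<subseteq> A" using qm unfolding quasi_quadratic_module_def by blast
  have sq: "\<And>a x. a \<in> A \<Longrightarrow> x \<in> \<M> \<Longrightarrow> a * a * x \<in> \<M>"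
    using qm unfolding quasi_quadratic_module_def by blast
  have A0: "0 \<in> A" and Amul: "\<And>x y. x \<in> A \<Longrightarrow> y \<in> A \<Longrightarrow> x * y \<in> A"
    using A(1) unfolding subring_def by auto
  obtain x1 where x1: "x1 \<in> \<M>" "x1 \<noteq> 0" using nonzero by blast
  have M0: "0 \<in> \<M>" using sq[OF A0 x1(1)] by simp
  have K: "\<And>x y. x \<in> \<M> \<Longrightarrow> x \<noteq> 0 \<Longrightarrow> y \<noteq> 0 \<Longrightarrow> val x < val y \<Longrightarrow> y \<in> \<M>"
    using key[OF vf char2 sqrt A(2) qm] by blast
  have vm: "\<And>x y. x \<noteq> 0 \<Longrightarrow> y \<noteq> 0 \<Longrightarrow> val (x * y) = val x + val y"
    using vf_mult[OF vf] by blast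
  have wb1: "S \<subseteq> val ` (A - {0})" using MA unfolding S_def by blast
  have wb2: "\<forall>g\<in>S. \<forall>h\<in>val ` ring_units A. h \<le> g"
  proof (intro ballI, rule ccontr)
    fix g h assume g: "g \<in> S" and h: "h \<in> val ` ring_units A" and nle: "\<not> h \<le> g"
    obtain x where x: "x \<in> \<M>" "x \<noteq> 0" "val x = g" using g unfolding S_def by blast
    obtain u where u: "u \<in> A" "u \<noteq> 0" "inverse u \<in> A" "val u = h"
      using h unfolding ring_units_def by blast
    have xu: "val x < val u" using nle x u by simp
    have "A \<subseteq> \<M>"
    proof
      fix y assume y: "y \<in> A"
      show "y \<in> \<M>"
      proof (cases "y = 0")
        case True then show ?thesis using M0 by simp
      next
        case y0: False
        show ?thesis
        proof (cases "val x < val y")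
          case True then show ?thesis using K x y0 by blast
        next
          case False
          define a where "a = y * inverse u"
          have aA: "a \<in> A" using Amul[OF y u(3)] a_def by simp
          have a0: "a \<noteq> 0" using a_def y0 u by simp
          have va: "val a = val y - val u"
            using vm[OF y0, of "inverse u"] vf_inv[OF vf u(2)] u a_def by simp
          have wM: "a * a * x \<in> \<M>" using sq[OF aA x(1)] .
          have w0: "a * a * x \<noteq> 0" using a0 x by simp
          have vw: "val (a * a * x) = val a + val a + val x"
            using vm a0 x(2) by simp
          have "val (a * a * x) < val y" using vw va ga1[of "val y" "val x" "val u"] False xu by simp
          then show ?thesis using K[OF wM w0 y0] by blast
        qed
      qed
    qed
    then show False using MA proper by blast
  qed
  have wb3: "\<forall>g\<in>S. \<forall>h\<in>val ` (A - {0}). g + h \<in> S"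
  proof (intro ballI)
    fix g h assume g: "g \<in> S" and h: "h \<in> val ` (A - {0})"
    obtain x where x: "x \<in> \<M>" "x \<noteq> 0" "val x = g" using g unfolding S_def by blast
    obtain a where a: "a \<in> A" "a \<noteq> 0" "val a = h" using h by blast
    have xa0: "x * a \<noteq> 0" using x a by simp
    have vxa: "val (x * a) = g + h" using vm x a by simp
    consider "val a > 0" | "val a = 0" | "val a < 0" by fastforce
    then show "g + h \<in> S"
    proof cases
      case 1
      then have "x * a \<in> \<M>" using K[OF x(1) x(2) xa0] vxa x a ga3 by metis
      then show ?thesis using vxa xa0 unfolding S_def by force
    next
      case 2
      then show ?thesis using g a by simp
    next
      case 3
      have wM: "a * a * x \<in> \<M>" using sq[OF a(1) x(1)] .
      have w0: "a * a * x \<noteq> 0" using a x by simp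
      have vw: "val (a * a * x) = val a + val a + val x"
        using vm a(2) x(2) by simp
      have "val (a * a * x) < val (x * a)" using vw vxa ga2[OF 3, of "val x"] x a by simp
      then have "x * a \<in> \<M>" using K[OF wM w0 xa0] by blast
      then show ?thesis using vxa xa0 unfolding S_def by force
    qed
  qed
  have WB: "well_behaved val A S" unfolding well_behaved_def using wb1 wb2 wb3 by blast
  have main: "(\<not> has_min S \<and> \<M> = Gamma1 val A S) \<or>
     (A = valuation_ring val \<and> has_min S \<and>
      \<M> = Gamma2 val pan A S (M_g val pan (LEAST g. g \<in> S) \<M>))"
  proof (cases "has_min S")
    case False
    have "\<M> = Gamma1 val A S"
    proof
      show "\<M> \<subseteq> Gamma1 val A S" using MA unfolding Gamma1_def S_def by blast
    next
      show "Gamma1 val A S \<subseteq> \<M>"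
      proof
        fix y assume "y \<in> Gamma1 val A S"
        then have "y = 0 \<or> (y \<in> A \<and> y \<noteq> 0 \<and> val y \<in> S)" unfolding Gamma1_def by blast
        then show "y \<in> \<M>"
        proof
          assume "y = 0" then show ?thesis using M0 by simp
        next
          assume y: "y \<in> A \<and> y \<noteq> 0 \<and> val y \<in> S"
          then obtain h where "h \<in> S" "\<not> val y \<le> h" using False unfolding has_min_def by blast
          then obtain x where "x \<in> \<M>" "x \<noteq> 0" "val x < val y" unfolding S_def by force
          then show ?thesis using K y by blast
        qed
      qed
    qed
    then show ?thesis using False by blast
  next
    case True
    then obtain g0 where g0: "g0 \<in> S" "\<forall>h\<in>S. g0 \<le> h" unfolding has_min_def by blast
    obtain x0 where x0: "x0 \<in> \<M>" "x0 \<noteq> 0" "val x0 = g0" using g0 unfolding S_def by blast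
    have L: "(LEAST g. g \<in> S) = g0" using g0 by (intro Least_equality) auto
    have minv: "\<And>y. y \<in> \<M> \<Longrightarrow> y \<noteq> 0 \<Longrightarrow> g0 \<le> val y" using g0 unfolding S_def by blast
    have AB: "A = valuation_ring val"
    proof
      show "A \<subseteq> valuation_ring val"
      proof
        fix a assume a: "a \<in> A"
        show "a \<in> valuation_ring val"
        proof (cases "a = 0")
          case True then show ?thesis unfolding valuation_ring_def by simp
        next
          case a0: False
          show ?thesis
          proof (rule ccontr)
            assume "a \<notin> valuation_ring val"
            then have neg: "val a < 0" unfolding valuation_ring_def by auto
            have wM: "a * a * x0 \<in> \<M>" using sq[OF a x0(1)] .
            have w0: "a * a * x0 \<noteq> 0" using a0 x0 by simp
            have vw: "val (a * a * x0) = val a + val a + val x0"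
              using vm a0 x0(2) by simp
            have "val (a * a * x0) < val x0"
              using vw ga2[OF neg, of "val x0"] neg
              by (metis add.commute add_less_same_cancel2 order.strict_trans)
            then show False using minv[OF wM w0] x0 by simp
          qed
        qed
      qed
    next
      show "valuation_ring val \<subseteq> A" using A(2) .
    qed
    have panz: "\<And>x. x \<noteq> 0 \<Longrightarrow> pan x \<noteq> 0" using pan unfolding pseudo_angular_def by blast
    have pan5: "\<And>x y. x \<noteq> 0 \<Longrightarrow> y \<noteq> 0 \<Longrightarrow> same_sq_class (val x) (val y) \<Longrightarrow> pan x = pan y \<Longrightarrow>
        (\<exists>u. u \<noteq> 0 \<and> y = u * u * x)" using pan unfolding pseudo_angular_def by blast
    have "\<M> = Gamma2 val pan A S (M_g val pan g0 \<M>)"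
    proof
      show "\<M> \<subseteq> Gamma2 val pan A S (M_g val pan g0 \<M>)"
      proof
        fix y assume y: "y \<in> \<M>"
        show "y \<in> Gamma2 val pan A S (M_g val pan g0 \<M>)"
        proof (cases "y = 0")
          case True then show ?thesis using MA y unfolding Gamma2_def by blast
        next
          case False
          have "g0 \<le> val y" using minv[OF y False] .
          then have "val y = g0 \<or> val y > g0" by auto
          moreover have "y \<in> A" using y MA by blast
          ultimately show ?thesis using y False unfolding Gamma2_def M_g_def L by blast
        qed
      qed
    next
      show "Gamma2 val pan A S (M_g val pan g0 \<M>) \<subseteq> \<M>"
      proof
        fix y assume "y \<in> Gamma2 val pan A S (M_g val pan g0 \<M>)"
        then have y: "y \<in> A" "y = 0 \<or> (val y = g0 \<and> pan y \<in> M_g val pan g0 \<M>) \<or> val y > g0"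
          unfolding Gamma2_def L by auto
        show "y \<in> \<M>"
        proof (cases "y = 0")
          case True then show ?thesis using M0 by simp
        next
          case y0: False
          show ?thesis
          proof (cases "val y > g0")
            case True then show ?thesis using K[OF x0(1) x0(2) y0] x0 by simp
          next
            case False
            then have vy: "val y = g0" and py: "pan y \<in> M_g val pan g0 \<M>" using y y0 by auto
            have "pan y \<noteq> 0" using panz y0 .
            then obtain x where x: "x \<in> \<M>" "x \<noteq> 0" "val x = g0" "pan x = pan y"
              using py unfolding M_g_def by auto
            have "same_sq_class (val x) (val y)" unfolding same_sq_class_def using x vy by (intro exI[of _ 0]) simp
            then obtain u where u: "u \<noteq> 0" "y = u * u * x" using pan5[OF x(2) y0] x by blast
            have "val y = val u + val u + val x" using u vm x(2) by simp
            then have "val u + val u = 0" using vy x by simp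
            then have "val u = 0" by (rule double_zero)
            then have "u \<in> A" using A(2) unfolding valuation_ring_def by auto
            then show ?thesis using sq[OF _ x(1)] u by simp
          qed
        qed
      qed
    qed
    then show ?thesis using AB True L by simp
  qed
  have notboth: "\<not> ((\<not> has_min S \<and> \<M> = Gamma1 val A S) \<and>
     (A = valuation_ring val \<and> has_min S \<and>
      \<M> = Gamma2 val pan A S (M_g val pan (LEAST g. g \<in> S) \<M>)))" by blast
  show ?thesis using WB main notboth unfolding S_def[symmetric] by blast
qed

end
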